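(* Let $|\Psi\rangle$ be a Haar random pure state in a $d$-dimensional Hilbert space, $|\Psi_0\rangle$ an arbitrary fixed unit vector, and $0<\epsilon<1$. Then $$\Pr\big[\||\Psi\rangle-|\Psi_0\rangle\|_2\le\epsilon\big]<\frac{g(\epsilon)^{2d-1}V_{2d-1}}{S_{2d-1}},\qquad g(\epsilon)=\frac{\epsilon}{\sqrt{1-\epsilon^2}}.$$
   Context: A Haar random pure state (with phase) is a uniformly random point of the unit sphere $S^{2d-1}\subset\mathbb{R}^{2d}\cong\mathbb{C}^d$. $S_{p-1}=2\pi^{p/2}/\Gamma(p/2)$ is the area of the unit sphere in $\mathbb{R}^p$ and $V_p=\pi^{p/2}/\Gamma(p/2+1)$ is the volume of the unit ball in $\mathbb{R}^p$. *)

theory Defs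
  imports "HOL-Analysis.Analysis"
begin

text \<open>Uniform (Haar) distribution on the unit sphere of a Euclidean space, realised as the
  radial projection of the uniform distribution on the closed unit ball (the cone measure,
  which coincides with the normalised surface measure on the sphere).  For
  the space complex ^ 'n (i.e. C^d, d = CARD('n), viewed as R^(2d)) this is the
  Haar random pure state with phase.\<close>
definition sphere_uniform :: "'a::euclidean_space measure" where
  "sphere_uniform = distr (uniform_measure lborel (cball 0 1)) borel (\<lambda>x. x /\<^sub>R norm x)"

definition ball_vol :: "nat \<Rightarrow> real" where
  "ball_vol p = pi powr (real p / 2) / Gamma (real p / 2 + 1)"

text \<open>Area S_(p-1) of the unit sphere in R^p; sphere_area p = S_(p-1).\<close>
definition sphere_area :: "nat \<Rightarrow> real" where
  "sphere_area p = 2 * pi powr (real p / 2) / Gamma (real p / 2)"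

end

theory Submission
  imports Defs
begin
lemma cone_emeasure:
  fixes b0 :: "'a::euclidean_space"
  assumes b0: "b0 \<in> Basis" and r: "r > 0"
  shows "emeasure lborel {x::'a. 0 \<le> x\<bullet>b0 \<and> x\<bullet>b0 \<le> 1 \<and> sqrt (\<Sum>b\<in>Basis-{b0}. (x\<bullet>b)\<^sup>2) \<le> r * (x\<bullet>b0)}
     = ennreal (unit_ball_vol (real (DIM('a) - 1)) * r ^ (DIM('a) - 1) / DIM('a))"
proof -
  define A where "A = Basis - {b0 :: 'a}"
  have finA: "finite A" and b0A: "b0 \<notin> A" and BA: "Basis = insert b0 A"
    using b0 by (auto simp: A_def)
  have cardA: "card A = DIM('a) - 1" using b0 by (simp add: A_def)
  have DIMA: "DIM('a) = Suc (card A)" using finA b0A by (subst BA) simp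
  let ?K = "{x::'a. 0 \<le> x\<bullet>b0 \<and> x\<bullet>b0 \<le> 1 \<and> sqrt (\<Sum>b\<in>A. (x\<bullet>b)\<^sup>2) \<le> r * (x\<bullet>b0)}"
  let ?P = "Pi\<^sub>M (insert b0 A) (\<lambda>_. (lborel::real measure))"
  interpret product_sigma_finite "\<lambda>_. (lborel::real measure)" by standard
  have Kclosed: "closed ?K"
    by (intro closed_Collect_conj closed_Collect_le continuous_intros)
  have setM: "{f. 0 \<le> f b0 \<and> f b0 \<le> 1 \<and> sqrt (\<Sum>b\<in>A. (f b)\<^sup>2) \<le> r * f b0} \<inter> space ?P \<in> sets ?P"
  proof -
    have eq: "{f. 0 \<le> f b0 \<and> f b0 \<le> 1 \<and> sqrt (\<Sum>b\<in>A. (f b)\<^sup>2) \<le> r * f b0} \<inter> space ?P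
       = {f \<in> space ?P. 0 \<le> f b0 \<and> f b0 \<le> 1 \<and> sqrt (\<Sum>b\<in>A. (f b)\<^sup>2) \<le> r * f b0}" by auto
    have mc: "(\<lambda>x. x b) \<in> borel_measurable ?P" if "b \<in> insert b0 A" for b
      using measurable_component_singleton[OF that, of "\<lambda>_. (lborel::real measure)"] by simp
    have m1[measurable]: "(\<lambda>x. sqrt (\<Sum>b\<in>A. (x b)\<^sup>2)) \<in> borel_measurable ?P"
      using mc by (intro borel_measurable_continuous_on[where f=sqrt] continuous_intros borel_measurable_sum borel_measurable_power) auto
    have m2[measurable]: "(\<lambda>x. r * x b0) \<in> borel_measurable ?P"
      using mc by (intro borel_measurable_times borel_measurable_const) auto
    have m0: "(\<lambda>x. x b0) \<in> borel_measurable ?P" using mc by auto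
    have "{f \<in> space ?P. 0 \<le> f b0 \<and> f b0 \<le> 1 \<and> sqrt (\<Sum>b\<in>A. (f b)\<^sup>2) \<le> r * f b0}
      = {f \<in> space ?P. (\<lambda>_. 0) f \<le> f b0} \<inter> {f \<in> space ?P. f b0 \<le> (\<lambda>_. 1) f} \<inter> {f \<in> space ?P. sqrt (\<Sum>b\<in>A. (f b)\<^sup>2) \<le> r * f b0}"
      by auto
    also have "\<dots> \<in> sets ?P"
      by (intro sets.Int borel_measurable_le m0 m1 m2 borel_measurable_const)
    finally have "{f \<in> space ?P. 0 \<le> f b0 \<and> f b0 \<le> 1 \<and> sqrt (\<Sum>b\<in>A. (f b)\<^sup>2) \<le> r * f b0} \<in> sets ?P" .
    then show ?thesis
      by (simp only: eq)
  qed
  have "emeasure lborel ?K = emeasure (distr (\<Pi>\<^sub>M b\<in>Basis. lborel) borel (\<lambda>f. \<Sum>b\<in>Basis. f b *\<^sub>R b)) ?K"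
    by (subst lborel_eq) simp
  also have "\<dots> = emeasure ?P ({f. 0 \<le> f b0 \<and> f b0 \<le> 1 \<and> sqrt (\<Sum>b\<in>A. (f b)\<^sup>2) \<le> r * f b0} \<inter> space ?P)"
  proof -
    have ip: "(\<Sum>b\<in>Basis. f b *\<^sub>R b) \<bullet> c = f c" if "c \<in> Basis" for f and c :: 'a
      using that by (simp add: inner_sum_left inner_Basis if_distrib[of "\<lambda>x. _ * x"] sum.delta cong: if_cong)
    have "A \<subseteq> Basis" using BA by auto
    then show ?thesis
      using Kclosed b0 BA
      by (subst emeasure_distr) (auto simp: borel_closed ip subset_iff intro!: arg_cong2[where f=emeasure])
  qed
  also have "\<dots> = nn_integral ?P (indicator ({f. 0 \<le> f b0 \<and> f b0 \<le> 1 \<and> sqrt (\<Sum>b\<in>A. (f b)\<^sup>2) \<le> r * f b0} \<inter> space ?P))"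
    using setM by (subst nn_integral_indicator) auto
  also have "\<dots> = (\<integral>\<^sup>+ y. \<integral>\<^sup>+ x. indicator ({f. 0 \<le> f b0 \<and> f b0 \<le> 1 \<and> sqrt (\<Sum>b\<in>A. (f b)\<^sup>2) \<le> r * f b0} \<inter> space ?P) (x(b0 := y))
                   \<partial>Pi\<^sub>M A (\<lambda>_. lborel) \<partial>lborel)"
    using finA b0A setM by (subst product_nn_integral_insert_rev) auto
  also have "\<dots> = (\<integral>\<^sup>+ (y::real). \<integral>\<^sup>+ x. indicator {0..1} y * indicator ({f. sqrt (\<Sum>b\<in>A. (f b)\<^sup>2) \<le> r * y} \<inter> space (Pi\<^sub>M A (\<lambda>_. lborel))) x \<partial>Pi\<^sub>M A (\<lambda>_. lborel) \<partial>lborel)"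
  proof (intro nn_integral_cong, goal_cases)
    case (1 y f)
    have "(\<Sum>x\<in>A. (if x = b0 then y else f x)\<^sup>2) = (\<Sum>x\<in>A. (f x)\<^sup>2)"
      using b0A by (intro sum.cong) auto
    thus ?case using 1 b0A
      by (auto simp: indicator_def PiE_def space_PiM extensional_def)
  qed
  also have "\<dots> = (\<integral>\<^sup>+ (y::real). indicator {0..1} y * emeasure (Pi\<^sub>M A (\<lambda>_. lborel)) ({f. sqrt (\<Sum>b\<in>A. (f b)\<^sup>2) \<le> r * y} \<inter> space (Pi\<^sub>M A (\<lambda>_. lborel))) \<partial>lborel)"
    using finA by (intro nn_integral_cong, subst nn_integral_cmult, simp, subst nn_integral_indicator) auto
  also have "\<dots> = (\<integral>\<^sup>+ (y::real). ennreal (unit_ball_vol (real (card A)) * r ^ card A * y ^ card A) * indicator {0..1} y \<partial>lborel)"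
  proof (intro nn_integral_cong_AE, goal_cases)
    case 1
    have "AE y in lborel. y \<noteq> 0" by (rule AE_lborel_singleton)
    thus ?case
    proof eventually_elim
      case (elim y)
      show ?case
      proof (cases "y \<in> {0..1}")
        case True
        with elim have "r * y > 0" using r by auto
        thus ?thesis using True by (subst emeasure_cball_aux[OF finA]) (auto simp: power_mult_distrib mult_ac)
      qed auto
    qed
  qed
  also have "\<dots> = (\<integral>\<^sup>+ (y::real). ennreal (unit_ball_vol (real (card A)) * r ^ card A) * (ennreal (y ^ card A) * indicator {0..1} y) \<partial>lborel)"
    using r by (intro nn_integral_cong) (auto simp: indicator_def ennreal_mult'[symmetric] mult.assoc)
  also have "\<dots> = ennreal (unit_ball_vol (real (card A)) * r ^ card A) * (\<integral>\<^sup>+ (y::real). ennreal (y ^ card A) * indicator {0..1} y \<partial>lborel)"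
    by (subst nn_integral_cmult) auto
  also have "(\<integral>\<^sup>+ (y::real). ennreal (y ^ card A) * indicator {0..1} y \<partial>lborel) = ennreal (1 / Suc (card A))"
  proof -
    have deriv: "((\<lambda>x. x ^ Suc (card A) / real (Suc (card A))) has_real_derivative y ^ card A) (at y)" for y :: real
      using DERIV_cdivide[OF DERIV_pow[of "Suc (card A)" y], of "real (Suc (card A))"] by simp
    have "(\<integral>\<^sup>+ (y::real). ennreal (y ^ card A) * indicator {0..1} y \<partial>lborel) = ennreal (1 ^ Suc (card A) / real (Suc (card A)) - 0 ^ Suc (card A) / real (Suc (card A)))"
      apply (rule nn_integral_FTC_Icc[where F = "\<lambda>x. x ^ Suc (card A) / real (Suc (card A))"])
      subgoal by measurable
      subgoal by (rule deriv)
      subgoal by simp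
      subgoal by simp
      done
    then show ?thesis by simp
  qed
  also have "ennreal (unit_ball_vol (real (card A)) * r ^ card A) * ennreal (1 / Suc (card A))
     = ennreal (unit_ball_vol (real (DIM('a) - 1)) * r ^ (DIM('a) - 1) / DIM('a))"
  proof -
    have e: "DIM('a) - 1 = card A" using DIMA by simp
    show ?thesis unfolding e unfolding DIMA using r
      by (subst ennreal_mult'[symmetric]) (simp_all add: field_simps)
  qed
  finally show ?thesis using A_def by simp
qed

lemma iso_emeasure_le:
  fixes g :: "'a::euclidean_space \<Rightarrow> 'a"
  assumes g: "orthogonal_transformation g" and ginv: "\<And>x. g (g x) = x" and S: "S \<in> sets lebesgue"
  shows "emeasure lebesgue (g ` S) \<le> emeasure lebesgue S"
proof (rule ennreal_le_epsilon)
  fix e :: real assume "0 < e"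
  obtain U where U: "open U" "S \<subseteq> U" "(U - S) \<in> lmeasurable" "emeasure lebesgue (U - S) < ennreal e"
    using sets_lebesgue_outer_open[OF S \<open>0 < e\<close>] by blast
  define K where "K = {(x, r::real). r > 0 \<and> ball x r \<subseteq> U}"
  have cov: "\<exists>i. i \<in> K \<and> x \<in> ball (fst i) (snd i) \<and> snd i < d" if xU: "x \<in> U" and dpos: "0 < d" for x d
  proof -
    obtain e' where e': "e' > 0" "ball x e' \<subseteq> U" by (rule openE[OF U(1) xU])
    have "ball x (min e' (d/2)) \<subseteq> ball x e'" by (rule subset_ball) simp
    with e' xU dpos have "(x, min e' (d/2)) \<in> K" by (auto simp: K_def)
    moreover have "x \<in> ball (fst (x, min e' (d/2))) (snd (x, min e' (d/2)))" using e' dpos by simp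
    moreover have "snd (x, min e' (d/2)) < d" using dpos by simp
    ultimately show ?thesis by blast
  qed
  obtain C where C: "countable C" "C \<subseteq> K"
    and pw: "pairwise (\<lambda>i j. disjnt (ball (fst i) (snd i)) (ball (fst j) (snd j))) C"
    and neg: "negligible (U - (\<Union>i \<in> C. ball (fst i) (snd i)))"
    using Vitali_covering_theorem_balls[of U K fst snd, OF cov] by blast
  define N where "N = U - (\<Union>i \<in> C. ball (fst i) (snd i))"
  have lin: "linear g" using g by (simp add: orthogonal_transformation)
  have gN: "negligible (g ` N)"
    using neg unfolding N_def
    by (intro negligible_differentiable_image_negligible linear_imp_differentiable_on lin) auto
  have gball: "g ` ball a r = ball (g a) r" for a r
    using image_orthogonal_transformation_ball[OF g] .
  have inj: "inj g" by (metis ginv injI)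
  have sub: "g ` S \<subseteq> (\<Union>i \<in> C. ball (g (fst i)) (snd i)) \<union> g ` N"
  proof
    fix y assume "y \<in> g ` S"
    then obtain s where s: "s \<in> S" "y = g s" by auto
    show "y \<in> (\<Union>i \<in> C. ball (g (fst i)) (snd i)) \<union> g ` N"
    proof (cases "\<exists>i\<in>C. s \<in> ball (fst i) (snd i)")
      case True
      then obtain i where "i \<in> C" "s \<in> ball (fst i) (snd i)" by blast
      then have "y \<in> ball (g (fst i)) (snd i)" using s gball[of "fst i" "snd i"] by blast
      then show ?thesis using \<open>i \<in> C\<close> by blast
    next
      case False
      then have "s \<in> N" using s U(2) by (auto simp: N_def)
      then show ?thesis using s by blast
    qed
  qed
  have disj1: "disjoint_family_on (\<lambda>i. ball (fst i) (snd i)) C"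
    using pw unfolding disjoint_family_on_def pairwise_def disjnt_def by blast
  have disj2: "disjoint_family_on (\<lambda>i. ball (g (fst i)) (snd i)) C"
    using disj1 unfolding disjoint_family_on_def gball[symmetric] image_Int[OF inj, symmetric] by simp
  have pos: "snd i > 0" if "i \<in> C" for i using that C(2) by (auto simp: K_def)
  have "emeasure lebesgue (g ` S) \<le> emeasure lebesgue ((\<Union>i \<in> C. ball (g (fst i)) (snd i)) \<union> g ` N)"
  proof (intro emeasure_mono sub sets.Un)
    have "open (\<Union>i \<in> C. ball (g (fst i)) (snd i))" by (intro open_UN) auto
    then show "(\<Union>i \<in> C. ball (g (fst i)) (snd i)) \<in> sets lebesgue" by (simp add: borel_open)
    show "g ` N \<in> sets lebesgue" using gN by (simp add: negligible_imp_sets)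
  qed
  also have "\<dots> = emeasure lebesgue (\<Union>i \<in> C. ball (g (fst i)) (snd i))"
  proof (intro emeasure_Un_null_set)
    have "open (\<Union>i \<in> C. ball (g (fst i)) (snd i))" by (intro open_UN) auto
    then show "(\<Union>i \<in> C. ball (g (fst i)) (snd i)) \<in> sets lebesgue" by (simp add: borel_open)
    show "g ` N \<in> null_sets lebesgue" using gN by (simp add: negligible_iff_null_sets)
  qed
  also have "\<dots> = (\<integral>\<^sup>+i. emeasure lebesgue (ball (g (fst i)) (snd i)) \<partial>count_space C)"
    using C(1) disj2 by (intro emeasure_UN_countable) auto
  also have "\<dots> = (\<integral>\<^sup>+i. emeasure lebesgue (ball (fst i) (snd i)) \<partial>count_space C)"
    using pos by (intro nn_integral_cong) (simp add: emeasure_ball less_imp_le)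
  also have "\<dots> = emeasure lebesgue (\<Union>i \<in> C. ball (fst i) (snd i))"
    using C(1) disj1 by (intro emeasure_UN_countable[symmetric]) auto
  also have "\<dots> \<le> emeasure lebesgue U"
  proof (rule emeasure_mono)
    show "(\<Union>i \<in> C. ball (fst i) (snd i)) \<subseteq> U"
    proof
      fix x assume "x \<in> (\<Union>i \<in> C. ball (fst i) (snd i))"
      then obtain i where "i \<in> C" "x \<in> ball (fst i) (snd i)" by blast
      moreover have "i \<in> K" using C(2) \<open>i \<in> C\<close> by blast
      then have "ball (fst i) (snd i) \<subseteq> U" by (cases i) (simp add: K_def)
      ultimately show "x \<in> U" by blast
    qed
    show "U \<in> sets lebesgue" using U(1) by (simp add: borel_open)
  qed
  also have "\<dots> \<le> emeasure lebesgue S + emeasure lebesgue (U - S)"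
  proof -
    have "U = S \<union> (U - S)" using U(2) by auto
    then have "emeasure lebesgue U = emeasure lebesgue (S \<union> (U - S))" by simp
    also have "\<dots> \<le> emeasure lebesgue S + emeasure lebesgue (U - S)"
      using S U(3) by (intro emeasure_subadditive) auto
    finally show ?thesis .
  qed
  also have "\<dots> \<le> emeasure lebesgue S + ennreal e"
    using U(4) by (intro add_left_mono) simp
  finally show "emeasure lebesgue (g ` S) \<le> emeasure lebesgue S + ennreal e" .
qed

lemma norm_perp_Basis:
  fixes y b0 :: "'a::euclidean_space"
  assumes b0: "b0 \<in> Basis"
  shows "norm (y - (y \<bullet> b0) *\<^sub>R b0) = sqrt (\<Sum>b\<in>Basis-{b0}. (y \<bullet> b)\<^sup>2)"
proof -
  let ?z = "y - (y \<bullet> b0) *\<^sub>R b0"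
  have zb: "?z \<bullet> b = (if b = b0 then 0 else y \<bullet> b)" if "b \<in> Basis" for b
    using that b0 by (auto simp: inner_diff_left inner_Basis)
  have "norm ?z = sqrt (\<Sum>b\<in>Basis. (?z \<bullet> b) * (?z \<bullet> b))"
    by (simp add: norm_eq_sqrt_inner euclidean_inner[of ?z ?z])
  also have "(\<Sum>b\<in>Basis. (?z \<bullet> b) * (?z \<bullet> b)) = (\<Sum>b\<in>Basis. if b = b0 then 0 else (y \<bullet> b)\<^sup>2)"
    by (intro sum.cong) (auto simp: zb power2_eq_square)
  also have "\<dots> = (\<Sum>b\<in>Basis-{b0}. (y \<bullet> b)\<^sup>2)"
    by (simp add: sum.If_cases Diff_eq)
  finally show ?thesis .
qed

lemma householder:
  fixes b0 u :: "'a::euclidean_space"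
  assumes nb: "norm b0 = 1" and nu: "norm u = 1"
  defines "v \<equiv> b0 - u"
  defines "g \<equiv> (\<lambda>x. x - (2 * (x \<bullet> v) / (v \<bullet> v)) *\<^sub>R v)"
  shows "orthogonal_transformation g" "\<And>x. g (g x) = x" "g b0 = u"
proof -
  have lin: "linear g"
    unfolding g_def by (intro linearI) (auto simp: algebra_simps inner_add_left add_divide_distrib scaleR_add_left diff_divide_distrib)
  have gsq: "g x \<bullet> g x = x \<bullet> x" for x
  proof (cases "v \<bullet> v = 0")
    case True then show ?thesis by (simp add: g_def)
  next
    case False
    then show ?thesis unfolding g_def
      by (simp add: inner_diff_left inner_diff_right inner_commute field_simps power2_eq_square)
  qed
  show "orthogonal_transformation g"
    unfolding orthogonal_transformation using lin gsq by (simp add: norm_eq_sqrt_inner)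
  show "g (g x) = x" for x
  proof (cases "v \<bullet> v = 0")
    case True then show ?thesis by (simp add: g_def)
  next
    case False
    have "g x \<bullet> v = - (x \<bullet> v)" using False unfolding g_def
      by (simp add: inner_diff_left field_simps)
    then show ?thesis using False by (simp add: g_def algebra_simps)
  qed
  show "g b0 = u"
  proof (cases "v \<bullet> v = 0")
    case True then show ?thesis by (simp add: g_def v_def)
  next
    case False
    have bb: "b0 \<bullet> b0 = 1" "u \<bullet> u = 1" using nb nu by (simp_all add: norm_eq_sqrt_inner)
    have "b0 \<bullet> v = 1 - b0 \<bullet> u" "v \<bullet> v = 2 - 2 * (b0 \<bullet> u)"
      using bb by (simp_all add: v_def inner_diff_left inner_diff_right inner_commute)
    then have "2 * (b0 \<bullet> v) = v \<bullet> v" by linarith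
    then have "2 * (b0 \<bullet> v) / (v \<bullet> v) = 1" using False by (metis divide_self)
    then have "g b0 = b0 - v" unfolding g_def by (simp only: scaleR_one)
    then show ?thesis by (simp add: v_def)
  qed
qed

lemma cap_in_cone:
  fixes x u :: "'a::euclidean_space"
  assumes nu: "norm u = 1" and e: "0 < \<epsilon>" "\<epsilon> < 1"
    and x1: "norm x \<le> 1" and xc: "norm (x /\<^sub>R norm x - u) \<le> \<epsilon>"
  defines "c \<equiv> 1 - \<epsilon>\<^sup>2 / 2"
  shows "0 \<le> x \<bullet> u \<and> x \<bullet> u \<le> 1 \<and> norm (x - (x \<bullet> u) *\<^sub>R u) \<le> (sqrt (1 - c\<^sup>2) / c) * (x \<bullet> u)"
proof -
  have "x \<noteq> 0"
  proof
    assume "x = 0" then have "norm (x /\<^sub>R norm x - u) = 1" using nu by simp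
    then show False using xc e by simp
  qed
  define n where "n = norm x"
  have n: "n > 0" "n \<le> 1" using \<open>x \<noteq> 0\<close> x1 by (auto simp: n_def)
  define y where "y = x /\<^sub>R n"
  have ny: "y \<bullet> y = 1" using n by (simp add: y_def n_def power2_norm_eq_inner[symmetric] divide_inverse power2_eq_square)
  have uu: "u \<bullet> u = 1" using nu by (simp add: power2_norm_eq_inner[symmetric])
  have "(norm (y - u))\<^sup>2 \<le> \<epsilon>\<^sup>2" using xc e by (simp add: y_def n_def power_mono)
  then have "2 - 2 * (y \<bullet> u) \<le> \<epsilon>\<^sup>2"
    by (simp add: power2_norm_eq_inner inner_diff_left inner_diff_right ny uu inner_commute)
  then have yu: "y \<bullet> u \<ge> c" by (simp add: c_def)
  have c: "c > 0" "c \<le> 1" using e by (auto simp: c_def power_less_one_iff) (smt (verit) power_le_one)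
  have xu: "x \<bullet> u = n * (y \<bullet> u)" using n by (simp add: y_def)
  have t0: "x \<bullet> u \<ge> n * c" using xu yu n by (simp add: mult_left_mono)
  have t1: "x \<bullet> u \<le> 1"
    using norm_cauchy_schwarz[of x u] nu n by (simp add: n_def)
  have c2: "0 \<le> 1 - c\<^sup>2" using c by (simp add: power_le_one)
  have xu0: "0 \<le> x \<bullet> u" using t0 n c by (smt (verit) mult_pos_pos)
  have nt: "(norm (x - (x \<bullet> u) *\<^sub>R u))\<^sup>2 = n\<^sup>2 - (x \<bullet> u)\<^sup>2"
    unfolding power2_norm_eq_inner n_def
    by (simp add: inner_diff_left inner_diff_right uu inner_commute power2_eq_square algebra_simps)
  have sq: "(n * c)\<^sup>2 \<le> (x \<bullet> u)\<^sup>2" using t0 n c by (intro power_mono) auto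
  have "(norm (x - (x \<bullet> u) *\<^sub>R u))\<^sup>2 \<le> ((sqrt (1 - c\<^sup>2) / c) * (x \<bullet> u))\<^sup>2"
  proof -
    have "1 - c\<^sup>2 \<ge> 0" using c by (simp add: power_le_one)
    then have "((sqrt (1 - c\<^sup>2) / c) * (x \<bullet> u))\<^sup>2 = (1 - c\<^sup>2) * (x \<bullet> u)\<^sup>2 / c\<^sup>2"
      by (simp add: power_mult_distrib power_divide)
    moreover have "n\<^sup>2 - (x \<bullet> u)\<^sup>2 \<le> (1 - c\<^sup>2) * (x \<bullet> u)\<^sup>2 / c\<^sup>2"
      using sq c by (simp add: field_simps power_mult_distrib)
    ultimately show ?thesis using nt by simp
  qed
  then have "norm (x - (x \<bullet> u) *\<^sub>R u) \<le> (sqrt (1 - c\<^sup>2) / c) * (x \<bullet> u)"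
    by (rule power2_le_imp_le) (use xu0 c c2 in \<open>auto intro!: mult_nonneg_nonneg divide_nonneg_pos\<close>)
  moreover note xu0
  ultimately show ?thesis using t1 by simp
qed

lemma r_lt_g:
  fixes \<epsilon> :: real assumes e: "0 < \<epsilon>" "\<epsilon> < 1"
  shows "sqrt (1 - (1 - \<epsilon>\<^sup>2 / 2)\<^sup>2) / (1 - \<epsilon>\<^sup>2 / 2) < \<epsilon> / sqrt (1 - \<epsilon>\<^sup>2)"
proof -
  define t where "t = \<epsilon>\<^sup>2"
  have t: "0 < t" "t < 1" using e by (auto simp: t_def power_less_one_iff)
  define c where "c = 1 - t / 2"
  have c: "c > 0" using t by (simp add: c_def)
  have lhs: "sqrt (1 - c\<^sup>2) / c = sqrt ((1 - c\<^sup>2) / c\<^sup>2)"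
    using c by (simp add: real_sqrt_divide)
  have rhs: "\<epsilon> / sqrt (1 - t) = sqrt (t / (1 - t))"
    using e by (simp add: real_sqrt_divide t_def)
  have "(1 - c\<^sup>2) / c\<^sup>2 < t / (1 - t)"
  proof -
    have d: "t * c\<^sup>2 - (1 - c\<^sup>2) * (1 - t) = t * t / 4"
      unfolding c_def by (simp add: power2_eq_square field_simps)
    have "0 < t * t / 4" using t by simp
    then have "(1 - c\<^sup>2) * (1 - t) < t * c\<^sup>2" using d by linarith
    then show ?thesis using c t by (simp add: field_simps)
  qed
  then have "sqrt ((1 - c\<^sup>2) / c\<^sup>2) < sqrt (t / (1 - t))" by simp
  then show ?thesis using lhs rhs by (simp add: c_def t_def)
qed

theorem lemma6:
  fixes \<Psi>0 :: "complex ^ 'n" and \<epsilon> :: real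
  assumes "norm \<Psi>0 = 1" and "0 < \<epsilon>" and "\<epsilon> < 1"
  shows "measure sphere_uniform {\<Psi> :: complex ^ 'n. norm (\<Psi> - \<Psi>0) \<le> \<epsilon>}
    < (\<epsilon> / sqrt (1 - \<epsilon>\<^sup>2)) ^ (2 * CARD('n) - 1) * ball_vol (2 * CARD('n) - 1)
        / sphere_area (2 * CARD('n))"
proof -
  note nu = assms(1) and e = assms(2,3)
  define u where "u = \<Psi>0"
  define p where "p = DIM(complex^'n)"
  have p: "p = 2 * CARD('n)" by (simp add: p_def)
  have p2: "p \<ge> 2" using p by simp
  obtain b0 :: "complex^'n" where b0: "b0 \<in> Basis" using nonempty_Basis by blast
  have nb0: "norm b0 = 1" using b0 by simp
  define v where "v = b0 - u"
  define g where "g = (\<lambda>x::complex^'n. x - (2 * (x \<bullet> v) / (v \<bullet> v)) *\<^sub>R v)"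
  have nu': "norm u = 1" using nu by (simp add: u_def)
  note H = householder[OF nb0 nu']
  have gT: "orthogonal_transformation g" unfolding g_def v_def by (rule H(1))
  have ginv: "g (g x) = x" for x unfolding g_def v_def by (rule H(2))
  have gb0: "g b0 = u" unfolding g_def v_def by (rule H(3))
  have gu: "g u = b0" using ginv[of b0] gb0 by simp
  have glin: "linear g" using gT by (simp add: orthogonal_transformation)
  have ginner: "g x \<bullet> g y = x \<bullet> y" for x y using gT by (simp add: orthogonal_transformation_def)
  have gnorm: "norm (g x) = norm x" for x using gT by (simp add: orthogonal_transformation)
  define c where "c = 1 - \<epsilon>\<^sup>2 / 2"
  define r where "r = sqrt (1 - c\<^sup>2) / c"
  have e2: "\<epsilon>\<^sup>2 < 1" "0 < \<epsilon>\<^sup>2" using e by (auto simp: power_less_one_iff)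
  have c: "0 < c" "c < 1" using e2 by (auto simp: c_def)
  have r: "r > 0" unfolding r_def using c by (simp add: power_less_one_iff)
  have rg: "r < \<epsilon> / sqrt (1 - \<epsilon>\<^sup>2)" unfolding r_def c_def using r_lt_g[OF e] .
  define f where "f = (\<lambda>x::complex^'n. x /\<^sub>R norm x)"
  define Cs where "Cs = {\<Psi>::complex^'n. norm (\<Psi> - \<Psi>0) \<le> \<epsilon>}"
  define P where "P = f -` Cs \<inter> cball 0 1"
  define K1 where "K1 = {x::complex^'n. 0 \<le> x \<bullet> u \<and> x \<bullet> u \<le> 1 \<and> norm (x - (x \<bullet> u) *\<^sub>R u) \<le> r * (x \<bullet> u)}"
  define K2 where "K2 = {x::complex^'n. 0 \<le> x \<bullet> b0 \<and> x \<bullet> b0 \<le> 1 \<and> sqrt (\<Sum>b\<in>Basis-{b0}. (x \<bullet> b)\<^sup>2) \<le> r * (x \<bullet> b0)}"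
  have PK1: "P \<subseteq> K1"
  proof
    fix x assume "x \<in> P"
    then have "norm x \<le> 1" "norm (x /\<^sub>R norm x - u) \<le> \<epsilon>"
      by (auto simp: P_def f_def Cs_def u_def)
    from cap_in_cone[OF nu[folded u_def] e this] show "x \<in> K1"
      by (simp add: K1_def r_def c_def)
  qed
  have K1K2: "K1 \<subseteq> g ` K2"
  proof
    fix x assume x: "x \<in> K1"
    have i: "g x \<bullet> b0 = x \<bullet> u" using ginner[of x u] gu by simp
    have "sqrt (\<Sum>b\<in>Basis-{b0}. (g x \<bullet> b)\<^sup>2) = norm (g x - (g x \<bullet> b0) *\<^sub>R b0)"
      using norm_perp_Basis[OF b0, of "g x"] by simp
    also have "g x - (g x \<bullet> b0) *\<^sub>R b0 = g (x - (x \<bullet> u) *\<^sub>R u)"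
      using i gu by (simp add: linear_diff[OF glin] linear_cmul[OF glin])
    also have "norm \<dots> = norm (x - (x \<bullet> u) *\<^sub>R u)" by (rule gnorm)
    finally have "g x \<in> K2" using x i by (simp add: K1_def K2_def)
    then show "x \<in> g ` K2" using ginv[of x] by (metis image_eqI)
  qed
  have gcont: "continuous (at x) g" for x using glin by (intro linear_continuous_at linear_conv_bounded_linear[THEN iffD1])
  have K1c: "closed K1" unfolding K1_def
    by (intro closed_Collect_conj closed_Collect_le continuous_intros)
  have K2c: "closed K2" unfolding K2_def
    by (intro closed_Collect_conj closed_Collect_le continuous_intros)
  have gK2: "g ` K2 = g -` K2"
    using ginv by (auto simp: image_iff) (metis)
  have gK2c: "closed (g ` K2)" unfolding gK2 using K2c gcont by (rule continuous_closed_vimage)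
  have fmeas: "f \<in> borel_measurable borel" unfolding f_def by measurable
  have Csc: "closed Cs" unfolding Cs_def by (intro closed_Collect_le continuous_intros)
  have Pb: "P \<in> sets borel"
    unfolding P_def using measurable_sets[OF fmeas borel_closed[OF Csc]] by (auto intro: sets.Int)
  have em2: "emeasure lborel K2 = ennreal (unit_ball_vol (real (p - 1)) * r ^ (p - 1) / p)"
    unfolding K2_def p_def by (rule cone_emeasure[OF b0 r])
  have "emeasure lborel P = emeasure lebesgue P" using Pb by simp
  also have "\<dots> \<le> emeasure lebesgue K1"
    using PK1 K1c by (intro emeasure_mono) (auto simp: borel_closed)
  also have "\<dots> \<le> emeasure lebesgue (g ` K2)"
    using K1K2 gK2c by (intro emeasure_mono) (auto simp: borel_closed)
  also have "\<dots> \<le> emeasure lebesgue K2"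
    using K2c by (intro iso_emeasure_le[OF gT ginv]) (auto simp: borel_closed)
  also have "\<dots> = emeasure lborel K2" using K2c by (simp add: borel_closed)
  finally have emP: "emeasure lborel P \<le> ennreal (unit_ball_vol (real (p - 1)) * r ^ (p - 1) / p)"
    using em2 by simp
  have mP: "measure lborel P \<le> unit_ball_vol (real (p - 1)) * r ^ (p - 1) / p"
  proof -
    have "measure lborel P = enn2real (emeasure lborel P)" by (simp add: measure_def)
    also have "\<dots> \<le> enn2real (ennreal (unit_ball_vol (real (p - 1)) * r ^ (p - 1) / p))"
      using emP by (intro enn2real_mono) auto
    also have "\<dots> = unit_ball_vol (real (p - 1)) * r ^ (p - 1) / p"
      using r by (intro enn2real_ennreal) auto
    finally show ?thesis .
  qed
  have Vp: "measure lborel (cball (0::complex^'n) 1) = unit_ball_vol (real p)"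
    using content_cball[of 1 "0::complex^'n"] by (simp add: p_def)
  have Vppos: "unit_ball_vol (real p) > 0" by simp
  have Vne: "unit_ball_vol (real CARD('n) * 2) \<noteq> 0"
    using unit_ball_vol_pos[of "real CARD('n) * 2"] by linarith
  have ms: "measure sphere_uniform Cs = measure lborel P / unit_ball_vol (real p)"
  proof -
    have "measure sphere_uniform Cs = measure (uniform_measure lborel (cball 0 1)) (f -` Cs \<inter> space (uniform_measure lborel (cball (0::complex^'n) 1)))"
      unfolding sphere_uniform_def f_def[symmetric]
      using fmeas Csc by (subst measure_distr) (auto simp: borel_closed)
    also have "\<dots> = measure lborel (cball 0 1 \<inter> (f -` Cs)) / measure lborel (cball (0::complex^'n) 1)"
      using Pb emeasure_cball[of 1 "0::complex^'n"] Vne measurable_sets[OF fmeas borel_closed[OF Csc]]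
      by (subst measure_uniform_measure) (auto simp: p_def)
    finally show ?thesis using Vp by (simp add: P_def Int_commute)
  qed
  define k where "k = p - 1"
  have k: "k \<ge> 1" "p = Suc k" using p2 by (auto simp: k_def)
  have bv: "ball_vol (2 * CARD('n) - 1) = unit_ball_vol (real k)"
    by (simp add: ball_vol_def unit_ball_vol_def k_def p)
  have sa: "sphere_area (2 * CARD('n)) = real p * unit_ball_vol (real p)"
  proof -
    define m where "m = CARD('n)"
    have m: "real m > 0" by (simp add: m_def)
    have G: "Gamma (real m + 1) = real m * Gamma (real m)"
    proof (rule Gamma_plus1)
      show "real m \<notin> \<int>\<^sub>\<le>\<^sub>0"
      proof
        assume "real m \<in> \<int>\<^sub>\<le>\<^sub>0"
        then have "real m \<le> 0" by (rule nonpos_Ints_nonpos)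
        then show False using m by simp
      qed
    qed
    have Gp: "Gamma (real m) > 0" using m by (rule Gamma_real_pos)
    have s1: "sphere_area (2 * CARD('n)) = 2 * pi powr real m / Gamma (real m)"
      by (simp add: sphere_area_def m_def)
    have s2: "unit_ball_vol (real p) = pi powr real m / Gamma (real m + 1)"
      by (simp add: unit_ball_vol_def p m_def)
    show ?thesis unfolding s1 s2 G using m Gp by (simp add: p m_def field_simps)
  qed
  have V1: "unit_ball_vol (real k) > 0" by simp
  have "r ^ k < (\<epsilon> / sqrt (1 - \<epsilon>\<^sup>2)) ^ k"
    using rg r k(1) by (intro power_strict_mono) auto
  then have "unit_ball_vol (real k) * r ^ k / p < unit_ball_vol (real k) * (\<epsilon> / sqrt (1 - \<epsilon>\<^sup>2)) ^ k / p"
    using V1 p2 by (intro divide_strict_right_mono mult_strict_left_mono) auto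
  then have "measure lborel P < unit_ball_vol (real k) * (\<epsilon> / sqrt (1 - \<epsilon>\<^sup>2)) ^ k / p"
    using mP by (simp add: k_def)
  then have "measure lborel P / unit_ball_vol (real p) < unit_ball_vol (real k) * (\<epsilon> / sqrt (1 - \<epsilon>\<^sup>2)) ^ k / p / unit_ball_vol (real p)"
    using Vppos by (intro divide_strict_right_mono) auto
  then show ?thesis
    unfolding Cs_def[symmetric] ms bv sa using p
    by (simp add: k_def field_simps)
qed

end
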